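(* Let $a,b$ be positive integers and let $k$ be an integer with $1\leq k\leq a+b$. Then $$\psi_k(K_{a,b})=\begin{cases}a+b & \text{if } k=1,\\ \min\{a,b\}-\left\lfloor \frac{k}{2}\right\rfloor+1 & \text{if } 1<k\leq 2\min\{a,b\}+1,\\ 0 & \text{otherwise.}\end{cases}$$
   Context: All graphs are finite, simple and nonempty. For a graph $G$ and a positive integer $k$, a $k$-path vertex cover ($k$-PVC) of $G$ is a set $S$ of vertices such that every path on $k$ vertices in $G$ contains at least one vertex of $S$ (if $G$ has no path on $k$ vertices, the empty set is a $k$-PVC). $\psi_k(G)$ denotes the minimum cardinality of a $k$-PVC of $G$. $K_{a,b}$ is the complete bipartite graph with parts of sizes $a$ and $b$. *)

theory Defs
  imports Main
begin

definition simple_graph :: "'a set \<Rightarrow> ('a \<Rightarrow> 'a \<Rightarrow> bool) \<Rightarrow> bool" where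
  "simple_graph V E \<longleftrightarrow> finite V \<and> V \<noteq> {} \<and>
     (\<forall>x\<in>V. \<forall>y\<in>V. E x y \<longrightarrow> E y x) \<and> (\<forall>x\<in>V. \<not> E x x)"

definition is_path :: "'a set \<Rightarrow> ('a \<Rightarrow> 'a \<Rightarrow> bool) \<Rightarrow> 'a list \<Rightarrow> bool" where
  "is_path V E p \<longleftrightarrow> p \<noteq> [] \<and> set p \<subseteq> V \<and> distinct p \<and>
     (\<forall>i. Suc i < length p \<longrightarrow> E (p ! i) (p ! Suc i))"

definition is_kpvc :: "'a set \<Rightarrow> ('a \<Rightarrow> 'a \<Rightarrow> bool) \<Rightarrow> nat \<Rightarrow> 'a set \<Rightarrow> bool" where
  "is_kpvc V E k S \<longleftrightarrow> S \<subseteq> V \<and>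
     (\<forall>p. is_path V E p \<and> length p = k \<longrightarrow> set p \<inter> S \<noteq> {})"

definition psi :: "'a set \<Rightarrow> ('a \<Rightarrow> 'a \<Rightarrow> bool) \<Rightarrow> nat \<Rightarrow> nat" where
  "psi V E k = Min (card ` {S. is_kpvc V E k S})"

definition Kab_V :: "nat \<Rightarrow> nat \<Rightarrow> (nat + nat) set" where
  "Kab_V a b = Inl ` {..<a} \<union> Inr ` {..<b}"

definition Kab_E :: "(nat + nat) \<Rightarrow> (nat + nat) \<Rightarrow> bool" where
  "Kab_E x y \<longleftrightarrow> isl x \<noteq> isl y"

end

theory Submission imports Defs begin

lemma alt_count:
  "successively (\<lambda>u v. isl u \<noteq> isl v) p \<Longrightarrow>
   (case p of [] \<Rightarrow> True | x # _ \<Rightarrow>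
     (if isl x then length (filter isl p) = length (filter (\<lambda>x. \<not> isl x) p) \<or>
                    length (filter isl p) = Suc (length (filter (\<lambda>x. \<not> isl x) p))
      else length (filter (\<lambda>x. \<not> isl x) p) = length (filter isl p) \<or>
           length (filter (\<lambda>x. \<not> isl x) p) = Suc (length (filter isl p))))"
  by (induction p rule: induct_list012) (auto split: if_splits)

lemma alt_bound:
  assumes "successively (\<lambda>u v. isl u \<noteq> isl v) p"
  shows "length (filter isl p) \<le> Suc (length (filter (\<lambda>x. \<not> isl x) p))"
    "length (filter (\<lambda>x. \<not> isl x) p) \<le> Suc (length (filter isl p))"
  using alt_count[OF assms] by (cases p; auto split: if_splits)+

lemma path_succ: "is_path V Kab_E p \<Longrightarrow> successively (\<lambda>u v. isl u \<noteq> isl v) p"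
  unfolding is_path_def successively_conv_nth Kab_E_def by blast

lemma len_split: "length p = length (filter isl p) + length (filter (\<lambda>x. \<not> isl x) p)"
  by (induction p) auto

lemma path_bound:
  assumes "is_path (Kab_V a b) Kab_E p" "set p \<inter> S = {}"
  shows "length p \<le> 2 * min (card (Inl ` {..<a} - S)) (card (Inr ` {..<b} - S)) + 1"
    "length p \<le> card (Inl ` {..<a} - S) + card (Inr ` {..<b} - S)"
proof -
  have d: "distinct p" and sp: "set p \<subseteq> Kab_V a b" using assms(1) unfolding is_path_def by auto
  have l: "length (filter isl p) \<le> card (Inl ` {..<a} - S)"
  proof -
    have "length (filter isl p) = card (set (filter isl p))"
      using d by (metis distinct_card distinct_filter)
    also have "\<dots> \<le> card (Inl ` {..<a} - S)"
      apply (rule card_mono) using sp assms(2) by (auto simp: Kab_V_def)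
    finally show ?thesis .
  qed
  have r: "length (filter (\<lambda>x. \<not> isl x) p) \<le> card (Inr ` {..<b} - S)"
  proof -
    have "length (filter (\<lambda>x. \<not> isl x) p) = card (set (filter (\<lambda>x. \<not> isl x) p))"
      using d by (metis distinct_card distinct_filter)
    also have "\<dots> \<le> card (Inr ` {..<b} - S)"
      apply (rule card_mono) using sp assms(2) by (auto simp: Kab_V_def)
    finally show ?thesis .
  qed
  note ab = alt_bound[OF path_succ[OF assms(1)]]
  show "length p \<le> 2 * min (card (Inl ` {..<a} - S)) (card (Inr ` {..<b} - S)) + 1"
    "length p \<le> card (Inl ` {..<a} - S) + card (Inr ` {..<b} - S)"
    using l r ab len_split[of p] by linarith+
qed

function ilv :: "'a list \<Rightarrow> 'a list \<Rightarrow> 'a list" where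
  "ilv [] ys = []"
| "ilv (x # xs) ys = x # ilv ys xs"
  by pat_completeness auto
termination by (relation "measure (\<lambda>(xs,ys). length xs + length ys)") auto

lemma ilv_len: "length (ilv xs ys) = (if length ys < length xs then 2 * length ys + 1 else 2 * length xs)"
  by (induction xs ys rule: ilv.induct) auto

lemma ilv_set: "set (ilv xs ys) \<subseteq> set xs \<union> set ys"
  by (induction xs ys rule: ilv.induct) auto

lemma ilv_distinct: "distinct xs \<Longrightarrow> distinct ys \<Longrightarrow> set xs \<inter> set ys = {} \<Longrightarrow> distinct (ilv xs ys)"
  by (induction xs ys rule: ilv.induct) (use ilv_set in fastforce)+

lemma ilv_succ: "(\<forall>x\<in>set xs. isl x = c) \<Longrightarrow> (\<forall>y\<in>set ys. isl y = (\<not> c)) \<Longrightarrow>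
  successively (\<lambda>u v. isl u \<noteq> isl v) (ilv xs ys)"
proof (induction xs ys arbitrary: c rule: ilv.induct)
  case (1 ys)
  then show ?case by simp
next
  case (2 x xs ys)
  have "successively (\<lambda>u v. isl u \<noteq> isl v) (ilv ys xs)"
    using 2(1)[of "\<not> c"] 2(2,3) by auto
  then show ?case using 2(2,3)
    by (cases ys) (auto simp: successively_Cons)
qed


lemma ilv_len2: "length ys \<le> length xs \<Longrightarrow>
  length (ilv xs ys) = min (length xs + length ys) (2 * length ys + 1)"
  by (simp add: ilv_len)

lemma card_diff_ge: "finite A \<Longrightarrow> finite S \<Longrightarrow> card A \<le> card (A - S) + card S"
proof -
  assume f: "finite A" and fS: "finite S"
  have "card A \<le> card ((A - S) \<union> (A \<inter> S))" by (rule card_mono) (use f in auto)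
  also have "\<dots> \<le> card (A - S) + card (A \<inter> S)" by (rule card_Un_le)
  also have "card (A \<inter> S) \<le> card S"
    using fS by (simp add: card_mono)
  finally show ?thesis by simp
qed

lemma card_V: "card (Kab_V a b) = a + b"
  unfolding Kab_V_def
  by (subst card_Un_disjoint) (auto simp: card_image)

lemma lower:
  assumes kp: "is_kpvc (Kab_V a b) Kab_E k S" and k1: "1 \<le> k" and kab: "k \<le> a + b"
    and km: "k \<le> 2 * min a b + 1"
  shows "min a b - k div 2 + 1 \<le> card S"
proof (rule ccontr)
  assume "\<not> ?thesis"
  hence t: "card S \<le> min a b - k div 2" by simp
  define L where "L = Inl ` {..<a} - S"
  define R where "R = Inr ` {..<b} - S"
  have SV: "S \<subseteq> Kab_V a b" using kp unfolding is_kpvc_def by auto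
  have fS: "finite S" using SV finite_subset by (auto simp: Kab_V_def)
  have cL: "a \<le> card L + card S" using card_diff_ge[of "Inl ` {..<a}" S] fS
    unfolding L_def by (simp add: card_image)
  have cR: "b \<le> card R + card S" using card_diff_ge[of "Inr ` {..<b}" S] fS
    unfolding R_def by (simp add: card_image)
  have "Kab_V a b - S = L \<union> R" unfolding L_def R_def Kab_V_def by auto
  hence "card (Kab_V a b) \<le> card L + card R + card S"
    using card_diff_ge[of "Kab_V a b" S] fS card_Un_le[of L R] by (simp add: Kab_V_def)
  hence cLR: "a + b \<le> card L + card R + card S" by (simp add: card_V)
  have fL: "finite L" "finite R" unfolding L_def R_def by auto
  obtain xs where xs: "set xs = L" "distinct xs" using finite_distinct_list[OF fL(1)] by blast
  obtain ys where ys: "set ys = R" "distinct ys" using finite_distinct_list[OF fL(2)] by blast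
  have lx: "length xs = card L" "length ys = card R" using xs ys distinct_card by metis+
  have islL: "\<forall>x\<in>set xs. isl x = True" using xs unfolding L_def by auto
  have islR: "\<forall>x\<in>set ys. isl x = (\<not> True)" using ys unfolding R_def by auto
  define q where "q = (if length ys \<le> length xs then ilv xs ys else ilv ys xs)"
  have qlen: "length q = min (length xs + length ys) (2 * min (length xs) (length ys) + 1)"
    unfolding q_def using ilv_len2[of ys xs] ilv_len2[of xs ys] by auto
  have qsucc: "successively (\<lambda>u v. isl u \<noteq> isl v) q"
    unfolding q_def using ilv_succ[OF islL islR] ilv_succ[of ys "False" xs] islL islR by auto
  have qset: "set q \<subseteq> L \<union> R" unfolding q_def using ilv_set[of xs ys] ilv_set[of ys xs] xs ys by auto
  have LR: "L \<inter> R = {}" unfolding L_def R_def by auto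
  have qdist: "distinct q" unfolding q_def using ilv_distinct[of xs ys] ilv_distinct[of ys xs] xs ys LR by (auto simp: Int_commute)
  have j: "2 * (k div 2) \<le> k" "k \<le> 2 * (k div 2) + 1" by auto
  have jm: "k div 2 \<le> min a b" using km by linarith
  have t2: "card S + k div 2 \<le> min a b" using t jm by linarith
  have A: "k \<le> card L + card R"
  proof (cases "a \<le> b")
    case True hence "min a b = a" by simp
    thus ?thesis using t2 cL cR cLR j kab km k1 by linarith
  next
    case False hence "min a b = b" by simp
    thus ?thesis using t2 cL cR cLR j kab km k1 by linarith
  qed
  have B: "k \<le> 2 * min (card L) (card R) + 1"
  proof (cases "a \<le> b")
    case True hence "min a b = a" by simp
    thus ?thesis using t2 cL cR j km k1 by linarith
  next
    case False hence "min a b = b" by simp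
    thus ?thesis using t2 cL cR j km k1 by linarith
  qed
  have "k \<le> length q" unfolding qlen lx using A B by simp
  define p where "p = take k q"
  have plen: "length p = k" unfolding p_def using \<open>k \<le> length q\<close> by simp
  have psucc: "successively (\<lambda>u v. isl u \<noteq> isl v) p"
    using qsucc successively_append_iff[of _ "take k q" "drop k q"] unfolding p_def by simp
  have ppath: "is_path (Kab_V a b) Kab_E p"
    unfolding is_path_def
  proof (intro conjI)
    show "p \<noteq> []" using plen k1 by auto
    show "set p \<subseteq> Kab_V a b" unfolding p_def using set_take_subset[of k q] qset
      unfolding L_def R_def Kab_V_def by blast
    show "distinct p" unfolding p_def using qdist by simp
    show "\<forall>i. Suc i < length p \<longrightarrow> Kab_E (p ! i) (p ! Suc i)"
      using psucc unfolding successively_conv_nth Kab_E_def by blast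
  qed
  have "set p \<inter> S = {}" unfolding p_def using set_take_subset[of k q] qset
    unfolding L_def R_def by blast
  moreover have "set p \<inter> S \<noteq> {}" using kp ppath plen unfolding is_kpvc_def by simp
  ultimately show False by simp
qed


lemma kpvc_fin: "finite {S. is_kpvc (Kab_V a b) Kab_E k S}"
proof -
  have "{S. is_kpvc (Kab_V a b) Kab_E k S} \<subseteq> Pow (Kab_V a b)" unfolding is_kpvc_def by auto
  thus ?thesis by (rule finite_subset) (simp add: Kab_V_def)
qed

lemma kpvc_sub: "is_kpvc (Kab_V a b) Kab_E k S \<Longrightarrow> finite S"
  unfolding is_kpvc_def using finite_subset[of S "Kab_V a b"] by (auto simp: Kab_V_def)

lemma psi_eqI:
  assumes "is_kpvc (Kab_V a b) Kab_E k S0" "card S0 = v"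
    "\<And>S. is_kpvc (Kab_V a b) Kab_E k S \<Longrightarrow> v \<le> card S"
  shows "psi (Kab_V a b) Kab_E k = v"
  unfolding psi_def
  by (rule Min_eqI) (use kpvc_fin assms in auto)

lemma upper_L:
  assumes "s \<le> a" "2 * (a - s) + 1 < k"
  shows "is_kpvc (Kab_V a b) Kab_E k (Inl ` {..<s})"
  unfolding is_kpvc_def
proof (intro conjI allI impI)
  show "Inl ` {..<s} \<subseteq> Kab_V a b" using assms by (auto simp: Kab_V_def)
  fix p assume p: "is_path (Kab_V a b) Kab_E p \<and> length p = k"
  show "set p \<inter> Inl ` {..<s} \<noteq> {}"
  proof
    assume d: "set p \<inter> Inl ` {..<s} = {}"
    have "Inl ` {..<a} - Inl ` {..<s} = Inl ` ({..<a} - {..<s})" by (rule image_set_diff[symmetric]) simp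
    moreover have "{..<a} - {..<s} = {s..<a}" by auto
    moreover have "card (Inl ` {s..<a}) = a - s" by (subst card_image) (auto intro: inj_onI)
    ultimately have c: "card (Inl ` {..<a} - Inl ` {..<s}) = a - s" by metis
    have "length p \<le> 2 * min (card ((Inl ` {..<a} :: (nat+nat) set) - Inl ` {..<s})) (card (Inr ` {..<b} - Inl ` {..<s})) + 1"
      using path_bound(1)[OF conjunct1[OF p] d] .
    hence "length p \<le> 2 * (a - s) + 1" unfolding c by linarith
    thus False using p assms by linarith
  qed
qed

lemma upper_R:
  assumes "s \<le> b" "2 * (b - s) + 1 < k"
  shows "is_kpvc (Kab_V a b) Kab_E k (Inr ` {..<s})"
  unfolding is_kpvc_def
proof (intro conjI allI impI)
  show "Inr ` {..<s} \<subseteq> Kab_V a b" using assms by (auto simp: Kab_V_def)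
  fix p assume p: "is_path (Kab_V a b) Kab_E p \<and> length p = k"
  show "set p \<inter> Inr ` {..<s} \<noteq> {}"
  proof
    assume d: "set p \<inter> Inr ` {..<s} = {}"
    have "Inr ` {..<b} - Inr ` {..<s} = Inr ` ({..<b} - {..<s})" by (rule image_set_diff[symmetric]) simp
    moreover have "{..<b} - {..<s} = {s..<b}" by auto
    moreover have "card (Inr ` {s..<b}) = b - s" by (subst card_image) (auto intro: inj_onI)
    ultimately have c: "card (Inr ` {..<b} - Inr ` {..<s}) = b - s" by metis
    have "length p \<le> 2 * min (card ((Inl ` {..<a} :: (nat+nat) set) - Inr ` {..<s})) (card ((Inr ` {..<b} :: (nat+nat) set) - Inr ` {..<s})) + 1"
      using path_bound(1)[OF conjunct1[OF p] d] .
    hence "length p \<le> 2 * (b - s) + 1" unfolding c by linarith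
    thus False using p assms by linarith
  qed
qed

theorem mainTheorem1:
  fixes a b k :: nat
  assumes "0 < a" and "0 < b" and "1 \<le> k" and "k \<le> a + b"
  shows "psi (Kab_V a b) Kab_E k =
          (if k = 1 then a + b
           else if k \<le> 2 * min a b + 1 then min a b - k div 2 + 1
           else 0)"
proof (cases "k = 1")
  case True
  have kv: "is_kpvc (Kab_V a b) Kab_E k (Kab_V a b)"
    unfolding is_kpvc_def using True by (auto simp: is_path_def Int_absorb2)
  have "a + b \<le> card S" if S: "is_kpvc (Kab_V a b) Kab_E k S" for S
  proof -
    have "Kab_V a b \<subseteq> S"
    proof
      fix v assume v: "v \<in> Kab_V a b"
      have "is_path (Kab_V a b) Kab_E [v]" using v by (simp add: is_path_def)
      hence "set [v] \<inter> S \<noteq> {}" using S True unfolding is_kpvc_def by auto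
      thus "v \<in> S" by simp
    qed
    hence "card (Kab_V a b) \<le> card S" using kpvc_sub[OF S] by (rule card_mono[rotated])
    thus ?thesis by (simp add: card_V)
  qed
  thus ?thesis using psi_eqI[OF kv card_V] True by simp
next
  case False
  show ?thesis
  proof (cases "k \<le> 2 * min a b + 1")
    case True
    have k2: "2 \<le> k" using False assms by simp
    have jm: "k div 2 \<le> min a b" "1 \<le> k div 2" using True k2 by linarith+
    define s where "s = min a b - k div 2 + 1"
    have ex: "\<exists>S. is_kpvc (Kab_V a b) Kab_E k S \<and> card S = s"
    proof (cases "a \<le> b")
      case ab: True
      have "is_kpvc (Kab_V a b) Kab_E k (Inl ` {..<s})"
        apply (rule upper_L) using jm ab unfolding s_def by (auto simp: min_def; linarith)+
      moreover have "card (Inl ` {..<s}) = s" by (simp add: card_image)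
      ultimately show ?thesis by blast
    next
      case ab: False
      have "is_kpvc (Kab_V a b) Kab_E k (Inr ` {..<s})"
        apply (rule upper_R) using jm ab unfolding s_def by (auto simp: min_def; linarith)+
      moreover have "card (Inr ` {..<s}) = s" by (simp add: card_image)
      ultimately show ?thesis by blast
    qed
    then obtain S0 where S0: "is_kpvc (Kab_V a b) Kab_E k S0" "card S0 = s" by blast
    have "psi (Kab_V a b) Kab_E k = s"
      by (rule psi_eqI[OF S0]) (use lower assms True s_def in auto)
    thus ?thesis using False True s_def by simp
  next
    case nt: False
    have "is_kpvc (Kab_V a b) Kab_E k {}"
      unfolding is_kpvc_def
    proof (intro conjI allI impI)
      fix p assume p: "is_path (Kab_V a b) Kab_E p \<and> length p = k"
      have "length p \<le> 2 * min a b + 1"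
        using path_bound(1)[of a b p "{}"] p by (simp add: card_image)
      thus "set p \<inter> {} \<noteq> {}" using p nt by linarith
    qed auto
    hence "psi (Kab_V a b) Kab_E k = 0" by (rule psi_eqI) auto
    thus ?thesis using False nt by simp
  qed
qed

end
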